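(* Let $0<q<1$ and $\Pi\sim\mathrm{Mallows}(\mathbb{N},q)$. Let $T_1:=\inf\{j\ge1:\Pi([j])=[j]\}$ (which is a.s. finite), set $X_1:=T_1$ and let $\Sigma_1$ be the permutation of $[X_1]$ given by $\Sigma_1(j)=\Pi(j)$. Fix $\ell\in\mathbb{N}$ and real numbers $a_1,\dots,a_\ell$, not all zero, and let $Y_1:=\sum_{j=1}^\ell a_jC_j(\Sigma_1)$. Then $\mathrm{Var}\bigl(Y_1\,\mathbb{E}X_1-X_1\,\mathbb{E}Y_1\bigr)>0$.
   Context: For $0<q<1$, $\Pi\sim\mathrm{Mallows}(\mathbb{N},q)$ is the random injection $\mathbb{N}\to\mathbb{N}$ constructed as follows: let $Z_1,Z_2,\dots$ be i.i.d. geometric with $\mathbb{P}(Z_i=k)=(1-q)q^{k-1}$, $k\ge1$; set $\Pi(1)=Z_1$ and, for $i>1$, let $\Pi(i)$ be the $Z_i$-th smallest element of $\mathbb{N}\setminus\{\Pi(1),\dots,\Pi(i-1)\}$. $[j]=\{1,\dots,j\}$ and $C_j(\pi)$ is the number of cycles of length $j$ of a permutation $\pi$. It is known that $\mathbb{E}T_1^2<\infty$. *)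

theory Defs
  imports "HOL-Probability.Probability" "HOL-Library.Infinite_Set"
begin

text \<open>Sample space: an i.i.d. sequence W 1, W 2, ... of geometric variables
  on {0,1,2,...} with P(W = n) = q^n (1-q); the paper's Z_i is W i + 1.
  (The coordinate 0 is unused.)\<close>
definition mallows_space :: "real \<Rightarrow> (nat \<Rightarrow> nat) measure" where
  "mallows_space q = PiM UNIV (\<lambda>_. measure_pmf (geometric_pmf (1 - q)))"

text \<open>First n values Pi(1),...,Pi(n) of the Mallows injection: Pi(i) is the
  Z_i-th smallest element (i.e. index W i, counting from 0) of the
  positive integers not yet used.\<close>
fun mallows_list :: "(nat \<Rightarrow> nat) \<Rightarrow> nat \<Rightarrow> nat list" where
  "mallows_list w 0 = []"
| "mallows_list w (Suc n) =
     mallows_list w n @ [enumerate ({1..} - set (mallows_list w n)) (w (Suc n))]"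

definition mallows_perm :: "(nat \<Rightarrow> nat) \<Rightarrow> nat \<Rightarrow> nat" where
  "mallows_perm w i = mallows_list w i ! (i - 1)"

definition first_block :: "(nat \<Rightarrow> nat) \<Rightarrow> nat" where
  "first_block w = (LEAST j. j \<ge> 1 \<and> mallows_perm w ` {1..j} = {1..j})"

definition first_block_perm :: "(nat \<Rightarrow> nat) \<Rightarrow> nat \<Rightarrow> nat" where
  "first_block_perm w x = (if x \<in> {1..first_block w} then mallows_perm w x else x)"

definition perm_orbit :: "('a \<Rightarrow> 'a) \<Rightarrow> 'a \<Rightarrow> 'a set" where
  "perm_orbit \<sigma> x = {(\<sigma> ^^ k) x | k. True}"

definition cycle_count :: "('a \<Rightarrow> 'a) \<Rightarrow> 'a set \<Rightarrow> nat \<Rightarrow> nat" where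
  "cycle_count \<sigma> A j = card {perm_orbit \<sigma> x | x. x \<in> A \<and> card (perm_orbit \<sigma> x) = j}"

end

theory Submission
  imports Defs
begin



definition ren :: "(nat \<Rightarrow> nat) \<Rightarrow> nat \<Rightarrow> bool" where
  "ren w j \<longleftrightarrow> (\<forall>i\<in>{1..j}. i + w i \<le> j)"

fun Rm :: "(nat \<Rightarrow> nat) \<Rightarrow> nat \<Rightarrow> nat" where
  "Rm w 0 = 0"
| "Rm w (Suc n) = max (Rm w n) (Suc n + w (Suc n))"

lemma Rm_ge: "n \<le> Rm w n"
  by (induction n) auto

lemma Rm_le_iff: "Rm w n \<le> t \<longleftrightarrow> (\<forall>i\<in>{1..n}. i + w i \<le> t)"
proof (induction n)
  case 0 then show ?case by simp
next
  case (Suc n)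
  have "{1..Suc n} = insert (Suc n) {1..n}" by auto
  with Suc show ?case by auto
qed

lemma enum_above: "enumerate {N<..} k = Suc N + (k::nat)"
proof (induction k arbitrary: N)
  case 0
  then show ?case by (simp add: enumerate_0 Least_equality)
next
  case (Suc k)
  have e0: "enumerate {N<..} 0 = Suc N" by (simp add: enumerate_0 Least_equality)
  have "{N<..} - {Suc N} = {Suc N<..}" by auto
  then show ?case using Suc by (simp add: enumerate_Suc' e0)
qed

lemma enum_split:
  fixes H :: "nat set"
  assumes "finite H" "H \<subseteq> {..N}"
  shows "(k < card H \<longrightarrow> enumerate (H \<union> {N<..}) k \<in> H) \<and>
         (card H \<le> k \<longrightarrow> enumerate (H \<union> {N<..}) k = Suc N + (k - card H))"
  using assms
proof (induction "card H" arbitrary: H k)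
  case 0
  then have "H = {}" by auto
  then show ?case by (simp add: enum_above)
next
  case (Suc h)
  then have ne: "H \<noteq> {}" by auto
  define m where "m = Min H"
  have mH: "m \<in> H" using ne Suc.prems m_def by auto
  have e0: "enumerate (H \<union> {N<..}) 0 = m"
    unfolding enumerate_0
  proof (rule Least_equality)
    show "m \<in> H \<union> {N<..}" using mH by auto
    fix y assume "y \<in> H \<union> {N<..}"
    then show "m \<le> y"
    proof
      assume "y \<in> H" then show ?thesis unfolding m_def using Suc.prems(1) by simp
    next
      assume "y \<in> {N<..}" moreover have "m \<le> N" using mH Suc.prems(2) by auto
      ultimately show ?thesis by simp
    qed
  qed
  have rem: "(H \<union> {N<..}) - {m} = (H - {m}) \<union> {N<..}"
    using mH Suc.prems by auto
  have ch: "h = card (H - {m})" using Suc.hyps mH Suc.prems by simp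
  show ?case
  proof (cases k)
    case 0 then show ?thesis using e0 mH Suc.hyps by auto
  next
    case (Suc k')
    have IH: "(k' < card (H - {m}) \<longrightarrow> enumerate ((H - {m}) \<union> {N<..}) k' \<in> H - {m}) \<and>
         (card (H - {m}) \<le> k' \<longrightarrow> enumerate ((H - {m}) \<union> {N<..}) k' = Suc N + (k' - card (H - {m})))"
      using Suc.hyps(1)[OF ch] Suc.prems by auto
    have "enumerate (H \<union> {N<..}) k = enumerate ((H - {m}) \<union> {N<..}) k'"
      using Suc by (simp add: enumerate_Suc' e0 rem)
    then show ?thesis using IH Suc ch Suc.hyps(2) by auto
  qed
qed

lemma ml_length[simp]: "length (mallows_list w n) = n"
  by (induction n) auto

lemma ml_prefix: "i \<le> n \<Longrightarrow> take i (mallows_list w n) = mallows_list w i"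
proof (induction n)
  case 0 then show ?case by simp
next
  case (Suc n)
  show ?case
  proof (cases "i = Suc n")
    case True then show ?thesis by simp
  next
    case False
    then have "i \<le> n" using Suc by simp
    then show ?thesis using Suc by simp
  qed
qed

lemma ml_nth: "1 \<le> i \<Longrightarrow> i \<le> n \<Longrightarrow> mallows_list w n ! (i - 1) = mallows_perm w i"
proof -
  assume a: "1 \<le> i" "i \<le> n"
  have "mallows_list w n ! (i - 1) = take i (mallows_list w n) ! (i - 1)"
    using a by simp
  also have "\<dots> = mallows_list w i ! (i - 1)" using ml_prefix[OF a(2)] by simp
  finally show ?thesis by (simp add: mallows_perm_def)
qed

lemma ml_cong: "(\<And>i. i \<le> n \<Longrightarrow> w i = w' i) \<Longrightarrow> mallows_list w n = mallows_list w' n"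
  by (induction n) auto

lemma set_as_image: "set xs = (\<lambda>i. xs ! (i - 1)) ` {1..length xs}"
proof -
  have "set xs = (\<lambda>i. xs ! i) ` {..<length xs}" by (auto simp: in_set_conv_nth)
  also have "\<dots> = (\<lambda>i. xs ! (i - 1)) ` (Suc ` {..<length xs})"
    by (simp add: image_image)
  also have "Suc ` {..<length xs} = {1..length xs}"
    by (rule image_Suc_lessThan)
  finally show ?thesis .
qed

lemma mperm_image: "mallows_perm w ` {1..j} = set (mallows_list w j)"
proof -
  have "mallows_perm w ` {1..j} = (\<lambda>i. mallows_list w j ! (i - 1)) ` {1..j}"
    by (rule image_cong[OF refl], rule ml_nth[symmetric]) auto
  then show ?thesis using set_as_image[of "mallows_list w j"] by simp
qed

lemma ml_inv: "distinct (mallows_list w n) \<and> set (mallows_list w n) \<subseteq> {1..Rm w n} \<and>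
   (1 \<le> n \<longrightarrow> Rm w n \<in> set (mallows_list w n))"
proof (induction n)
  case 0 then show ?case by simp
next
  case (Suc n)
  define L where "L = mallows_list w n"
  define R where "R = Rm w n"
  define H where "H = {1..R} - set L"
  have dL: "distinct L" and sL: "set L \<subseteq> {1..R}" and RL: "1 \<le> n \<longrightarrow> R \<in> set L"
    using Suc unfolding L_def R_def by auto
  have cL: "card (set L) = n" using dL by (simp add: distinct_card L_def)
  have fH: "finite H" and HN: "H \<subseteq> {..R}" unfolding H_def by auto
  have cH: "card H = R - n" unfolding H_def using sL cL by (simp add: card_Diff_subset)
  have Rn: "n \<le> R" unfolding R_def by (rule Rm_ge)
  have A: "{1..} - set L = H \<union> {R<..}" unfolding H_def using sL by auto
  define e where "e = enumerate (H \<union> {R<..}) (w (Suc n))"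
  have ml: "mallows_list w (Suc n) = L @ [e]"
  proof -
    have "mallows_list w (Suc n) = L @ [enumerate ({1..} - set L) (w (Suc n))]" unfolding L_def by simp
    then show ?thesis unfolding A e_def .
  qed
  show ?case
  proof (cases "w (Suc n) < card H")
    case True
    then have eH: "e \<in> H" using enum_split[OF fH HN] unfolding e_def by blast
    have RS: "Rm w (Suc n) = R" using True cH Rn unfolding R_def by auto
    have "n \<noteq> 0" using True cH unfolding R_def by (cases n) auto
    then show ?thesis using eH dL sL RL RS unfolding ml H_def by auto
  next
    case False
    then have ee: "e = Suc R + (w (Suc n) - card H)" using enum_split[OF fH HN] unfolding e_def by auto
    then have e2: "e = Suc n + w (Suc n)" using cH Rn False by auto
    have RS: "Rm w (Suc n) = e" using e2 ee unfolding R_def by auto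
    have "e \<notin> set L" using ee sL by auto
    then show ?thesis using dL sL RS ee unfolding ml by auto
  qed
qed

lemma block_iff_ren: "1 \<le> j \<Longrightarrow> mallows_perm w ` {1..j} = {1..j} \<longleftrightarrow> ren w j"
proof -
  assume j: "1 \<le> j"
  have I: "distinct (mallows_list w j)" "set (mallows_list w j) \<subseteq> {1..Rm w j}"
     "Rm w j \<in> set (mallows_list w j)" using ml_inv[of w j] j by auto
  have c: "card (set (mallows_list w j)) = j" using I(1) by (simp add: distinct_card)
  show ?thesis
  proof
    assume "mallows_perm w ` {1..j} = {1..j}"
    then have "set (mallows_list w j) = {1..j}" using mperm_image[of w j] by simp
    then have "Rm w j \<le> j" using I(3) by auto
    then show "ren w j" by (simp add: ren_def Rm_le_iff)
  next
    assume "ren w j"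
    then have "Rm w j \<le> j" by (simp add: ren_def Rm_le_iff)
    then have "set (mallows_list w j) \<subseteq> {1..j}" using I(2) by auto
    then have "set (mallows_list w j) = {1..j}" using c by (intro card_subset_eq) auto
    then show "mallows_perm w ` {1..j} = {1..j}" using mperm_image[of w j] by simp
  qed
qed

lemma first_block_ren: "first_block w = (LEAST j. 1 \<le> j \<and> ren w j)"
proof -
  have "(\<lambda>j. j \<ge> 1 \<and> mallows_perm w ` {1..j} = {1..j}) = (\<lambda>j. 1 \<le> j \<and> ren w j)"
    by (intro ext) (use block_iff_ren in auto)
  then show ?thesis unfolding first_block_def by simp
qed

lemma ren_shift: "ren w m \<Longrightarrow> ren w (m + k) \<longleftrightarrow> ren (\<lambda>i. w (m + i)) k"
  unfolding ren_def
proof safe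
  fix i assume a: "\<forall>i\<in>{1..m}. i + w i \<le> m" "\<forall>i\<in>{1..m+k}. i + w i \<le> m + k" "i \<in> {1..k}"
  then have "(m + i) + w (m + i) \<le> m + k" by auto
  then show "i + w (m + i) \<le> k" by simp
next
  fix i assume a: "\<forall>i\<in>{1..m}. i + w i \<le> m" "\<forall>i\<in>{1..k}. i + w (m + i) \<le> k" "i \<in> {1..m+k}"
  show "i + w i \<le> m + k"
  proof (cases "i \<le> m")
    case True
    then have "i \<in> {1..m}" using a(3) by auto
    then have "i + w i \<le> m" using a(1) by blast
    then show ?thesis by simp
  next
    case False
    then have "i - m \<in> {1..k}" using a by auto
    then have "(i - m) + w (m + (i - m)) \<le> k" using a by blast
    then show ?thesis using False by simp
  qed
qed

lemma block_le: "1 \<le> j \<Longrightarrow> ren w j \<Longrightarrow> first_block w \<le> j"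
  unfolding first_block_ren by (rule Least_le) simp




definition cyc :: "nat \<Rightarrow> (nat \<Rightarrow> nat) set" where
  "cyc n = {w. (\<forall>i\<in>{1..<n}. w i = 1) \<and> w n = 0}"

lemma cyc_list_lt: "w \<in> cyc n \<Longrightarrow> k < n \<Longrightarrow> mallows_list w k = [2..<k+2]"
proof (induction k)
  case 0 then show ?case by simp
next
  case (Suc k)
  have IH: "mallows_list w k = [2..<k+2]" using Suc by simp
  have wk: "w (Suc k) = 1" using Suc.prems unfolding cyc_def by auto
  have A: "{1..} - set [2..<k+2] = {1} \<union> {Suc k<..}" by auto
  have "enumerate ({1} \<union> {Suc k<..}) 1 = Suc (Suc k) + (1 - card {1::nat})"
    using enum_split[of "{1::nat}" "Suc k" 1] by auto
  then have e: "enumerate ({1} \<union> {Suc k<..}) 1 = k + 2" by simp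
  have "mallows_list w (Suc k) = [2..<k+2] @ [enumerate ({1..} - set [2..<k+2]) (w (Suc k))]"
    using IH by simp
  also have "\<dots> = [2..<k+2] @ [k+2]" unfolding A wk e ..
  also have "\<dots> = [2..<Suc k+2]" by simp
  finally show ?case .
qed

lemma cyc_list: "w \<in> cyc n \<Longrightarrow> 1 \<le> n \<Longrightarrow> mallows_list w n = [2..<n+1] @ [1]"
proof -
  assume w: "w \<in> cyc n" and n: "1 \<le> n"
  then obtain k where k: "n = Suc k" by (cases n) auto
  have IH: "mallows_list w k = [2..<k+2]" using cyc_list_lt[OF w] k by simp
  have wk: "w (Suc k) = 0" using w k unfolding cyc_def by auto
  have A: "{1..} - set [2..<k+2] = {1} \<union> {Suc k<..}" by auto
  have "enumerate ({1} \<union> {Suc k<..}) 0 \<in> {1::nat}"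
    using enum_split[of "{1::nat}" "Suc k" 0] by auto
  then have e: "enumerate ({1} \<union> {Suc k<..}) 0 = 1" by simp
  have "mallows_list w n = mallows_list w k @ [enumerate ({1..} - set (mallows_list w k)) (w (Suc k))]"
    using k by simp
  also have "\<dots> = [2..<k+2] @ [enumerate ({1..} - set [2..<k+2]) (w (Suc k))]"
    unfolding IH ..
  also have "\<dots> = [2..<k+2] @ [1]" unfolding A wk e ..
  also have "[2..<k+2] = [2..<n+1]" using k by simp
  finally show ?thesis .
qed

lemma cyc_perm: "w \<in> cyc n \<Longrightarrow> 1 \<le> i \<Longrightarrow> i \<le> n \<Longrightarrow> mallows_perm w i = (if i < n then i + 1 else 1)"
proof -
  assume w: "w \<in> cyc n" and i: "1 \<le> i" "i \<le> n"
  have "mallows_perm w i = mallows_list w n ! (i - 1)" using ml_nth[OF i] by simp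
  also have "\<dots> = ([2..<n+1] @ [1]) ! (i - 1)" using cyc_list[OF w] i by simp
  also have "\<dots> = (if i < n then i + 1 else 1)"
    using i by (auto simp: nth_append)
  finally show ?thesis .
qed

lemma cyc_first_block: "w \<in> cyc n \<Longrightarrow> 1 \<le> n \<Longrightarrow> first_block w = n"
proof -
  assume w: "w \<in> cyc n" and n: "1 \<le> n"
  have img: "mallows_perm w ` {1..j} = (\<lambda>i. if i < n then i + 1 else 1) ` {1..j}" if "j \<le> n" for j
    using that by (intro image_cong[OF refl]) (auto simp: cyc_perm[OF w])
  have full: "mallows_perm w ` {1..n} = {1..n}"
  proof -
    have "(\<lambda>i. if i < n then i + 1 else 1) ` {1..n} = {1..n}"
    proof (intro equalityI subsetI)
      fix x assume "x \<in> (\<lambda>i. if i < n then i + 1 else 1) ` {1..n}" then show "x \<in> {1..n}" using n by auto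
    next
      fix x assume x: "x \<in> {1..n}"
      show "x \<in> (\<lambda>i. if i < n then i + 1 else 1) ` {1..n}"
      proof (cases "x = 1")
        case True then show ?thesis using n by (intro image_eqI[of _ _ n]) auto
      next
        case False then show ?thesis using x by (intro image_eqI[of _ _ "x - 1"]) auto
      qed
    qed
    then show ?thesis using img[of n] by simp
  qed
  have notj: "\<not> (mallows_perm w ` {1..j} = {1..j})" if "1 \<le> j" "j < n" for j
  proof
    assume "mallows_perm w ` {1..j} = {1..j}"
    then have "1 \<in> (\<lambda>i. if i < n then i + 1 else 1) ` {1..j}" using img[of j] that by auto
    then show False using that by auto
  qed
  show ?thesis unfolding first_block_def
  proof (rule Least_equality)
    show "1 \<le> n \<and> mallows_perm w ` {1..n} = {1..n}" using n full by simp
  next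
    fix y assume "1 \<le> y \<and> mallows_perm w ` {1..y} = {1..y}"
    then show "n \<le> y" using notj[of y] by (cases "y < n") auto
  qed
qed

definition cycp :: "nat \<Rightarrow> nat \<Rightarrow> nat" where
  "cycp n x = (if x \<in> {1..n} then (if x < n then x + 1 else 1) else x)"

lemma cyc_fbp: "w \<in> cyc n \<Longrightarrow> 1 \<le> n \<Longrightarrow> first_block_perm w = cycp n"
  by (intro ext) (auto simp: first_block_perm_def cyc_first_block cycp_def cyc_perm)

lemma cycp_pow: "x \<in> {1..n} \<Longrightarrow> (cycp n ^^ k) x = (x - 1 + k) mod n + 1"
proof (induction k)
  case 0 then show ?case by auto
next
  case (Suc k)
  have n: "0 < n" using Suc.prems by auto
  define z where "z = (x - 1 + k) mod n"
  have zn: "z < n" unfolding z_def using n by simp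
  have "(cycp n ^^ Suc k) x = cycp n (z + 1)" using Suc by (simp add: z_def)
  also have "\<dots> = (if Suc z = n then 0 else Suc z) + 1" using zn by (auto simp: cycp_def)
  also have "\<dots> = (x - 1 + Suc k) mod n + 1" by (simp add: z_def mod_Suc)
  finally show ?case .
qed

lemma cycp_orbit: "x \<in> {1..n} \<Longrightarrow> perm_orbit (cycp n) x = {1..n}"
proof (intro equalityI subsetI)
  assume x: "x \<in> {1..n}"
  then have n: "0 < n" by auto
  fix y
  { assume "y \<in> perm_orbit (cycp n) x"
    then obtain k where "y = (cycp n ^^ k) x" unfolding perm_orbit_def by auto
    then show "y \<in> {1..n}" using cycp_pow[OF x] n by (auto simp: Suc_le_eq)
  }
  { assume y: "y \<in> {1..n}"
    have "(cycp n ^^ (n + y - x)) x = (x - 1 + (n + y - x)) mod n + 1" by (rule cycp_pow[OF x])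
    also have "x - 1 + (n + y - x) = (y - 1) + n" using x y by auto
    also have "((y - 1) + n) mod n + 1 = y"
    proof -
      have "((y - 1) + n) mod n = (y - 1) mod n" by simp
      also have "\<dots> = y - 1" using y by (intro mod_less) auto
      finally have h: "((y - 1) + n) mod n = y - 1" .
      have y1: "1 \<le> y" using y by simp
      show ?thesis using y1 h by linarith
    qed
    finally show "y \<in> perm_orbit (cycp n) x" unfolding perm_orbit_def
      by (auto intro!: exI[of _ "n + y - x"])
  }
qed

lemma cycp_count: "1 \<le> n \<Longrightarrow> cycle_count (cycp n) {1..n} j = (if j = n then 1 else 0)"
proof -
  assume n: "1 \<le> n"
  have o: "perm_orbit (cycp n) x = {1..n}" if "x \<in> {1..n}" for x using cycp_orbit that by blast
  have cn: "card {1..n} = n" by simp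
  show ?thesis
  proof (cases "j = n")
    case True
    have "{perm_orbit (cycp n) x |x. x \<in> {1..n} \<and> card (perm_orbit (cycp n) x) = j} = {{1..n}}"
    proof (intro equalityI subsetI)
      fix S assume "S \<in> {perm_orbit (cycp n) x |x. x \<in> {1..n} \<and> card (perm_orbit (cycp n) x) = j}"
      then obtain x where "S = perm_orbit (cycp n) x" "x \<in> {1..n}" by blast
      then show "S \<in> {{1..n}}" using o by simp
    next
      fix S assume "S \<in> {{1..n}}"
      then have S: "S = {1..n}" by simp
      have 1: "(1::nat) \<in> {1..n}" using n by simp
      have "S = perm_orbit (cycp n) 1 \<and> 1 \<in> {1..n} \<and> card (perm_orbit (cycp n) 1) = j"
        using o[OF 1] 1 S True cn by simp
      then show "S \<in> {perm_orbit (cycp n) x |x. x \<in> {1..n} \<and> card (perm_orbit (cycp n) x) = j}"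
        by blast
    qed
    then show ?thesis unfolding cycle_count_def using True by simp
  next
    case False
    have "{perm_orbit (cycp n) x |x. x \<in> {1..n} \<and> card (perm_orbit (cycp n) x) = j} = {}"
      using o cn False by auto
    then show ?thesis unfolding cycle_count_def using False by simp
  qed
qed

lemma cyc_Y: assumes "w \<in> cyc n" "1 \<le> n" shows "
  (\<Sum>j=1..l. a j * real (cycle_count (first_block_perm w) {1..first_block w} j)) =
  (if n \<le> l then a n else 0)"
proof -
  have "(\<Sum>j=1..l. a j * real (cycle_count (first_block_perm w) {1..first_block w} j)) =
        (\<Sum>j=1..l. (if j = n then a n else 0))"
  proof (rule sum.cong[OF refl])
    fix j assume "j \<in> {1..l}"
    show "a j * real (cycle_count (first_block_perm w) {1..first_block w} j) = (if j = n then a n else 0)"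
      using cycp_count[OF assms(2), of j] by (simp add: cyc_fbp[OF assms] cyc_first_block[OF assms])
  qed
  also have "\<dots> = (if n \<le> l then a n else 0)" using assms(2) by (simp add: sum.delta)
  finally show ?thesis .
qed




lemma renewal_bound:
  fixes r u :: "nat \<Rightarrow> real" and c q :: real
  assumes c: "0 < c" and q: "0 < q" "q < 1"
    and r0: "\<And>k. 0 \<le> r k"
    and uc: "\<And>m. c \<le> u m"
    and udec: "\<And>m k. u (m + k) \<le> u m"
    and udiff: "\<And>m k. u m - u (m + k) \<le> q ^ Suc m / (1 - q)"
    and ident: "\<And>j. (\<Sum>k\<le>j. r k * u (j - k)) = 1"
  shows "(\<Sum>k\<le>N. r k) \<le> 1 / c" and "(\<Sum>k\<le>N. real k * r k) \<le> q / ((1 - q)^2 * c^2)"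
proof -
  define \<mu> where "\<mu> j = (\<Sum>k\<le>j. r k)" for j
  have mu_nonneg: "0 \<le> \<mu> j" for j unfolding \<mu>_def by (intro sum_nonneg r0)
  have mu_bound: "c * \<mu> j \<le> 1" for j
  proof -
    have "c * \<mu> j = (\<Sum>k\<le>j. r k * c)" unfolding \<mu>_def by (simp add: sum_distrib_left mult.commute)
    also have "\<dots> \<le> (\<Sum>k\<le>j. r k * u (j - k))" by (intro sum_mono mult_left_mono uc r0)
    finally show ?thesis using ident[of j] by simp
  qed
  show "(\<Sum>k\<le>N. r k) \<le> 1 / c" using mu_bound[of N] c by (simp add: \<mu>_def field_simps)
  define \<epsilon> where "\<epsilon> i = q ^ Suc i / (1 - q)" for i
  have key: "c * (\<mu> N - \<mu> j) \<le> (\<Sum>k\<le>j. r k * \<epsilon> (j - k))" if jN: "j \<le> N" for j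
  proof -
    have "u N * \<mu> N = (\<Sum>k\<le>N. r k * u N)" unfolding \<mu>_def by (simp add: sum_distrib_left mult.commute)
    also have "\<dots> \<le> (\<Sum>k\<le>N. r k * u (N - k))"
    proof (intro sum_mono mult_left_mono r0)
      fix k assume "k \<in> {..N}"
      then show "u N \<le> u (N - k)" using udec[of "N - k" k] by simp
    qed
    also have "\<dots> = 1" by (rule ident)
    also have "\<dots> = (\<Sum>k\<le>j. r k * u (j - k))" by (rule ident[symmetric])
    also have "\<dots> \<le> (\<Sum>k\<le>j. r k * (u N + \<epsilon> (j - k)))"
    proof (intro sum_mono mult_left_mono r0)
      fix k assume k: "k \<in> {..j}"
      have "u (j - k) - u ((j - k) + (N - j + k)) \<le> \<epsilon> (j - k)" unfolding \<epsilon>_def by (rule udiff)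
      moreover have "(j - k) + (N - j + k) = N" using k jN by auto
      ultimately show "u (j - k) \<le> u N + \<epsilon> (j - k)" by simp
    qed
    also have "\<dots> = u N * \<mu> j + (\<Sum>k\<le>j. r k * \<epsilon> (j - k))"
      unfolding \<mu>_def by (simp add: distrib_left sum.distrib sum_distrib_left mult.commute)
    finally have "u N * (\<mu> N - \<mu> j) \<le> (\<Sum>k\<le>j. r k * \<epsilon> (j - k))" by (simp add: algebra_simps)
    moreover have "\<mu> j \<le> \<mu> N" unfolding \<mu>_def using jN by (intro sum_mono2 r0) auto
    moreover have "c * (\<mu> N - \<mu> j) \<le> u N * (\<mu> N - \<mu> j)"
      using calculation(2) by (intro mult_right_mono uc) simp
    ultimately show ?thesis by linarith
  qed
  define g where "g j = (\<Sum>k\<le>j. r k * q ^ Suc (j - k))" for j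
  have g_nonneg: "0 \<le> g j" for j unfolding g_def using q by (intro sum_nonneg mult_nonneg_nonneg r0) auto
  have g_Suc: "g (Suc j) = q * (g j + r (Suc j))" for j
  proof -
    have "g (Suc j) = (\<Sum>k\<le>j. r k * q ^ Suc (Suc j - k)) + r (Suc j) * q" unfolding g_def by simp
    also have "(\<Sum>k\<le>j. r k * q ^ Suc (Suc j - k)) = q * g j"
      unfolding g_def sum_distrib_left by (intro sum.cong refl) (simp add: Suc_diff_le)
    finally show ?thesis by (simp add: algebra_simps)
  qed
  have ginv: "(1 - q) * (\<Sum>j<M. g j) + g M = q * \<mu> M" for M
  proof (induction M)
    case 0 then show ?case by (simp add: g_def \<mu>_def)
  next
    case (Suc M)
    have "(1 - q) * (\<Sum>j<Suc M. g j) + g (Suc M) = (1 - q) * (\<Sum>j<M. g j) + g M + q * r (Suc M)"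
      by (simp add: g_Suc algebra_simps)
    also have "\<dots> = q * \<mu> (Suc M)" using Suc by (simp add: \<mu>_def algebra_simps)
    finally show ?case .
  qed
  have eps_sum: "(\<Sum>k\<le>j. r k * \<epsilon> (j - k)) = g j / (1 - q)" for j
    unfolding g_def \<epsilon>_def by (simp add: sum_divide_distrib)
  have tel: "(\<Sum>k\<le>M. real k * r k) = (\<Sum>j<M. \<mu> M - \<mu> j)" for M
  proof (induction M)
    case 0 then show ?case by simp
  next
    case (Suc M)
    have "(\<Sum>j<Suc M. \<mu> (Suc M) - \<mu> j) = (\<Sum>j<M. (\<mu> M - \<mu> j) + r (Suc M)) + (\<mu> (Suc M) - \<mu> M)"
      by (simp add: \<mu>_def algebra_simps)
    also have "\<dots> = (\<Sum>j<M. \<mu> M - \<mu> j) + real M * r (Suc M) + r (Suc M)"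
      by (simp add: sum.distrib \<mu>_def)
    also have "\<dots> = (\<Sum>k\<le>Suc M. real k * r k)" using Suc by (simp add: algebra_simps)
    finally show ?case by simp
  qed
  have "c * (\<Sum>k\<le>N. real k * r k) = (\<Sum>j<N. c * (\<mu> N - \<mu> j))"
    by (simp add: tel sum_distrib_left)
  also have "\<dots> \<le> (\<Sum>j<N. g j / (1 - q))"
    by (intro sum_mono) (use key eps_sum in auto)
  also have "\<dots> = (\<Sum>j<N. g j) / (1 - q)" by (simp add: sum_divide_distrib)
  also have "\<dots> \<le> q * \<mu> N / (1 - q) / (1 - q)"
  proof -
    have "(1 - q) * (\<Sum>j<N. g j) \<le> q * \<mu> N" using ginv[of N] g_nonneg[of N] by linarith
    then have "(\<Sum>j<N. g j) \<le> q * \<mu> N / (1 - q)" using q by (simp add: field_simps)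
    then show ?thesis using q by (intro divide_right_mono) auto
  qed
  also have "\<dots> \<le> q * (1 / c) / (1 - q) / (1 - q)"
  proof -
    have "\<mu> N \<le> 1 / c" using mu_bound[of N] c by (simp add: field_simps)
    then show ?thesis using q by (intro divide_right_mono mult_left_mono) auto
  qed
  finally have "c * (\<Sum>k\<le>N. real k * r k) \<le> q / (c * (1 - q)^2)"
    by (simp add: power2_eq_square field_simps)
  then have "(\<Sum>k\<le>N. real k * r k) \<le> q / (c * (1 - q)^2) / c"
    by (subst pos_le_divide_eq[OF c]) (metis mult.commute)
  also have "q / (c * (1 - q)^2) / c = q / ((1 - q)^2 * c^2)" by (simp add: power2_eq_square mult_ac)
  finally show "(\<Sum>k\<le>N. real k * r k) \<le> q / ((1 - q)^2 * c^2)" .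
qed




locale mal = fixes q :: real assumes q0: "0 < q" and q1: "q < 1"

sublocale mal \<subseteq> sequence_space "measure_pmf (geometric_pmf (1 - q))"
  unfolding sequence_space_def product_prob_space_def product_prob_space_axioms_def product_sigma_finite_def
  by (simp add: prob_space_measure_pmf prob_space_imp_sigma_finite)

definition nr :: "(nat \<Rightarrow> nat) \<Rightarrow> nat \<Rightarrow> bool" where
  "nr w k \<longleftrightarrow> (\<forall>j\<in>{1..k}. \<not> ren w j)"

lemma ren_cong: "(\<And>i. i \<le> j \<Longrightarrow> w i = w' i) \<Longrightarrow> ren w j = ren w' j"
  unfolding ren_def by (intro ball_cong refl) auto

lemma nr_cong: "(\<And>i. i \<le> k \<Longrightarrow> w i = w' i) \<Longrightarrow> nr w k = nr w' k"
  unfolding nr_def by (intro ball_cong refl arg_cong[where f=Not] ren_cong) auto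

context mal
begin

lemma S_eq: "S = mallows_space q" by (simp add: mallows_space_def)

lemma space_S[simp]: "space S = UNIV"
  by (auto simp: space_PiM PiE_def extensional_def)

lemma comp_meas[measurable]: "(\<lambda>w. w i) \<in> measurable S (count_space UNIV)"
proof -
  have "(\<lambda>w. w i) \<in> measurable S (measure_pmf (geometric_pmf (1 - q)))"
    by (rule measurable_component_singleton) simp
  moreover have "measurable S (measure_pmf (geometric_pmf (1 - q))) = measurable S (count_space UNIV)"
    by (rule measurable_cong_sets) auto
  ultimately show ?thesis by simp
qed

lemma fin_dep_meas:
  assumes dep: "\<And>w w'. (\<And>i. i \<le> n \<Longrightarrow> w i = w' i) \<Longrightarrow> f w = f w'"
    and N: "space N = UNIV"
  shows "f \<in> measurable S N"
proof -
  define enc where "enc w = map w [0..<Suc n]" for w :: "nat \<Rightarrow> nat"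
  define dec where "dec xs = (\<lambda>i. if i < length xs then xs ! i else 0)" for xs :: "nat list"
  have fe: "f w = f (dec (enc w))" for w
    by (rule dep) (auto simp: enc_def dec_def nth_map simp del: upt_Suc)
  have enc_meas: "enc \<in> measurable S (count_space UNIV)"
    unfolding measurable_count_space_eq2_countable
  proof (intro conjI ballI)
    show "enc \<in> space S \<rightarrow> UNIV" by simp
    fix xs :: "nat list"
    show "enc -` {xs} \<inter> space S \<in> sets S"
    proof (cases "length xs = Suc n")
      case True
      have enc_nth: "enc w ! i = w i" if "i \<le> n" for w i
        using that by (simp add: enc_def nth_map_upt del: upt_Suc)
      have eq: "enc w = xs \<longleftrightarrow> (\<forall>i\<in>{..n}. w i = xs ! i)" for w
      proof
        assume "enc w = xs"
        then show "\<forall>i\<in>{..n}. w i = xs ! i" using enc_nth by auto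
      next
        assume a: "\<forall>i\<in>{..n}. w i = xs ! i"
        show "enc w = xs"
        proof (rule nth_equalityI)
          show "length (enc w) = length xs" using True by (simp add: enc_def)
          fix i assume "i < length (enc w)"
          then have "i \<le> n" by (simp add: enc_def)
          then show "enc w ! i = xs ! i" using a enc_nth by auto
        qed
      qed
      have "enc -` {xs} \<inter> space S = (\<Inter>i\<in>{..n}. (\<lambda>w. w i) -` {xs ! i} \<inter> space S)"
        using eq by auto
      also have "\<dots> \<in> sets S"
        by (intro sets.finite_INT measurable_sets[OF comp_meas]) auto
      finally show ?thesis .
    next
      case False
      then have "enc -` {xs} \<inter> space S = {}" by (auto simp: enc_def)
      then show ?thesis by simp
    qed
  qed
  have "(\<lambda>xs. f (dec xs)) \<in> measurable (count_space UNIV) N"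
    using N by (simp add: measurable_count_space_eq1)
  then have "(\<lambda>w. f (dec (enc w))) \<in> measurable S N"
    using enc_meas by (rule measurable_compose[rotated])
  then show ?thesis using fe by simp
qed

lemma ren_meas: "{w. ren w m} \<in> sets S"
proof -
  have "(\<lambda>w. ren w m) \<in> measurable S (count_space UNIV)"
    by (rule fin_dep_meas[of m]) (auto simp: ren_def)
  then have "(\<lambda>w. ren w m) -` {True} \<inter> space S \<in> sets S" by (rule measurable_sets) simp
  then show ?thesis by (simp add: vimage_def)
qed

lemma nr_meas: "{w. nr w k} \<in> sets S"
proof -
  have "(\<lambda>w. nr w k) \<in> measurable S (count_space UNIV)"
    by (rule fin_dep_meas[of k]) (auto simp: nr_def ren_def)
  then have "(\<lambda>w. nr w k) -` {True} \<inter> space S \<in> sets S" by (rule measurable_sets) simp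
  then show ?thesis by (simp add: vimage_def)
qed

lemma fb_meas: "first_block \<in> measurable S (count_space UNIV)"
proof -
  have eq: "first_block = (\<lambda>w. LEAST j. 1 \<le> j \<and> ren w j)"
    by (intro ext) (rule first_block_ren)
  show ?thesis unfolding eq
  proof (rule measurable_Least)
    fix j
    show "(\<lambda>w. 1 \<le> j \<and> ren w j) \<in> measurable S (count_space UNIV)"
      by (rule fin_dep_meas[of j]) (auto simp: ren_def)
  qed
qed

lemma qpow_le1[simp]: "q ^ k \<le> 1"
  using q0 q1 by (intro power_le_one) auto

lemma qpow_nonneg[simp]: "0 \<le> q ^ k"
  using q0 by simp

lemma one_minus_qpow[simp]: "0 \<le> 1 - q ^ k"
  using qpow_le1[of k] by linarith

lemma geo_le: "emeasure (measure_pmf (geometric_pmf (1 - q))) {..k} = ennreal (1 - q ^ Suc k)"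
proof -
  have "measure_pmf.prob (geometric_pmf (1 - q)) {..k} = (\<Sum>n\<le>k. pmf (geometric_pmf (1 - q)) n)"
    by (rule measure_measure_pmf_finite) simp
  also have "\<dots> = (\<Sum>n\<le>k. q ^ n * (1 - q))"
    using q0 q1 by (simp add: pmf_geometric)
  also have "\<dots> = 1 - q ^ Suc k"
    by (induction k) (simp_all add: algebra_simps)
  finally show ?thesis by (simp add: measure_pmf.emeasure_eq_measure)
qed

lemma ren_prob: "measure S {w. ren w m} = (\<Prod>i\<in>{1..m}. 1 - q ^ i)"
proof -
  have ri: "ren w m \<longleftrightarrow> (\<forall>i\<in>{1..m}. w i \<in> {..m - i})" for w
    unfolding ren_def atMost_iff by (intro ball_cong refl) auto
  have set: "{w. ren w m} = {x \<in> space S. \<forall>i\<in>{1..m}. x i \<in> {..m - i}}"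
    using ri by auto
  have "emeasure S {w. ren w m} = (\<Prod>i\<in>{1..m}. emeasure (measure_pmf (geometric_pmf (1 - q))) {..m - i})"
    unfolding set by (rule emeasure_PiM_Collect) auto
  also have "\<dots> = (\<Prod>i\<in>{1..m}. ennreal (1 - q ^ Suc (m - i)))" by (simp add: geo_le)
  also have "\<dots> = ennreal (\<Prod>i\<in>{1..m}. 1 - q ^ Suc (m - i))"
    by (intro prod_ennreal) (simp del: power_Suc)
  finally have "measure S {w. ren w m} = (\<Prod>i\<in>{1..m}. 1 - q ^ Suc (m - i))"
    by (simp add: P.emeasure_eq_measure prod_nonneg del: power_Suc)
  also have "\<dots> = (\<Prod>i\<in>{1..m}. 1 - q ^ i)"
    by (subst prod.atLeastAtMost_rev) (intro prod.cong refl, auto simp: Suc_diff_le)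
  finally show ?thesis .
qed


lemma shift_meas: "(\<lambda>w i. w (m + i)) \<in> measurable S S"
  by (rule measurable_PiM_single') (auto simp: space_PiM)

lemma indep_shift:
  assumes A: "A \<in> sets S" and B: "B \<in> sets S"
    and Adep: "\<And>w w'. (\<And>i. i \<le> m \<Longrightarrow> w i = w' i) \<Longrightarrow> w \<in> A \<longleftrightarrow> w' \<in> A"
    and Bdep: "\<And>w w'. (\<And>i. 0 < i \<Longrightarrow> w i = w' i) \<Longrightarrow> w \<in> B \<longleftrightarrow> w' \<in> B"
  shows "emeasure S {w. w \<in> A \<and> (\<lambda>i. w (m + i)) \<in> B} = emeasure S A * emeasure S B"
proof -
  define f where "f = (\<lambda>(\<omega>, \<omega>'). comb_seq (Suc m) \<omega> (\<omega>' :: nat \<Rightarrow> nat))"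
  define E where "E = {w. w \<in> A \<and> (\<lambda>i. w (m + i)) \<in> B}"
  define B' where "B' = {\<omega>'. case_nat 0 \<omega>' \<in> B}"
  have cn: "(\<lambda>\<omega>'. case_nat 0 \<omega>') \<in> measurable S S"
    by (rule measurable_case_nat') auto
  have B'_sets: "B' \<in> sets S"
  proof -
    have "(\<lambda>\<omega>'. case_nat 0 \<omega>') -` B \<inter> space S \<in> sets S" by (rule measurable_sets[OF cn B])
    then show ?thesis by (simp add: B'_def vimage_def)
  qed
  have E_sets: "E \<in> sets S"
  proof -
    have "(\<lambda>w i. w (m + i)) -` B \<inter> space S \<in> sets S" by (rule measurable_sets[OF shift_meas B])
    then have "A \<inter> ((\<lambda>w i. w (m + i)) -` B \<inter> space S) \<in> sets S" using A by auto
    moreover have "A \<inter> ((\<lambda>w i. w (m + i)) -` B \<inter> space S) = E" by (auto simp: E_def)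
    ultimately show ?thesis by simp
  qed
  have fmeas: "f \<in> measurable (S \<Otimes>\<^sub>M S) S" unfolding f_def by (rule measurable_comb_seq)
  have pre: "f -` E \<inter> space (S \<Otimes>\<^sub>M S) = A \<times> B'"
  proof -
    have "f (x, y) \<in> E \<longleftrightarrow> x \<in> A \<and> y \<in> B'" for x y
    proof -
      have "f (x, y) \<in> A \<longleftrightarrow> x \<in> A"
        by (rule Adep) (simp add: f_def comb_seq_def)
      moreover have "(\<lambda>i. f (x, y) (m + i)) = case_nat (x m) y"
        by (rule ext) (simp add: f_def comb_seq_def split: nat.split)
      moreover have "case_nat (x m) y \<in> B \<longleftrightarrow> case_nat 0 y \<in> B"
        by (rule Bdep) (simp split: nat.split)
      ultimately show ?thesis by (simp add: E_def B'_def)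
    qed
    then show ?thesis by (auto simp: space_pair_measure)
  qed
  have "emeasure S E = emeasure (distr (S \<Otimes>\<^sub>M S) S f) E"
    unfolding f_def by (simp add: PiM_comb_seq)
  also have "\<dots> = emeasure (S \<Otimes>\<^sub>M S) (f -` E \<inter> space (S \<Otimes>\<^sub>M S))"
    by (rule emeasure_distr[OF fmeas E_sets])
  also have "\<dots> = emeasure S A * emeasure S B'"
    unfolding pre by (rule P.emeasure_pair_measure_Times[OF A B'_sets])
  also have "emeasure S B' = emeasure S B"
  proof -
    define g where "g = (\<lambda>(s, \<omega>). case_nat s (\<omega> :: nat \<Rightarrow> nat))"
    have gmeas: "g \<in> measurable (measure_pmf (geometric_pmf (1 - q)) \<Otimes>\<^sub>M S) S"
      unfolding g_def by measurable
    have preg: "g -` B \<inter> space (measure_pmf (geometric_pmf (1 - q)) \<Otimes>\<^sub>M S) = UNIV \<times> B'"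
    proof -
      have "g (s, y) \<in> B \<longleftrightarrow> y \<in> B'" for s y
      proof -
        have "case_nat s y \<in> B \<longleftrightarrow> case_nat 0 y \<in> B"
          by (rule Bdep) (simp split: nat.split)
        then show ?thesis by (simp add: g_def B'_def)
      qed
      then show ?thesis by (auto simp: space_pair_measure)
    qed
    have "emeasure S B = emeasure (distr (measure_pmf (geometric_pmf (1 - q)) \<Otimes>\<^sub>M S) S g) B"
      unfolding g_def by (simp add: PiM_iter)
    also have "\<dots> = emeasure (measure_pmf (geometric_pmf (1 - q)) \<Otimes>\<^sub>M S) (g -` B \<inter> space (measure_pmf (geometric_pmf (1 - q)) \<Otimes>\<^sub>M S))"
      by (rule emeasure_distr[OF gmeas B])
    also have "\<dots> = emeasure (measure_pmf (geometric_pmf (1 - q))) UNIV * emeasure S B'"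
      unfolding preg by (rule P.emeasure_pair_measure_Times) (auto simp: B'_sets)
    also have "\<dots> = emeasure S B'"
      using measure_pmf.emeasure_space_1[of "geometric_pmf (1 - q)"] by simp
    finally show ?thesis by simp
  qed
  finally show ?thesis by (simp add: E_def)
qed

lemma F_prob: "measure S {w. ren w m \<and> nr (\<lambda>i. w (m + i)) k} =
   measure S {w. ren w m} * measure S {w. nr w k}"
proof -
  have "emeasure S {w. w \<in> {w. ren w m} \<and> (\<lambda>i. w (m + i)) \<in> {w. nr w k}} =
        emeasure S {w. ren w m} * emeasure S {w. nr w k}"
  proof (rule indep_shift[OF ren_meas nr_meas])
    fix w w' :: "nat \<Rightarrow> nat" assume "\<And>i. i \<le> m \<Longrightarrow> w i = w' i"
    then show "w \<in> {w. ren w m} \<longleftrightarrow> w' \<in> {w. ren w m}" by (auto simp: ren_def)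
  next
    fix w w' :: "nat \<Rightarrow> nat" assume "\<And>i. 0 < i \<Longrightarrow> w i = w' i"
    then show "w \<in> {w. nr w k} \<longleftrightarrow> w' \<in> {w. nr w k}" by (auto simp: nr_def ren_def)
  qed
  then have "ennreal (measure S {w. ren w m \<and> nr (\<lambda>i. w (m + i)) k}) =
     ennreal (measure S {w. ren w m} * measure S {w. nr w k})"
    by (simp add: P.emeasure_eq_measure ennreal_mult)
  then show ?thesis by (subst (asm) ennreal_inj) auto
qed

lemma renewal_identity: "(\<Sum>m\<le>j. measure S {w. ren w m} * measure S {w. nr w (j - m)}) = 1"
proof -
  define F where "F m = {w. ren w m \<and> nr (\<lambda>i. w (m + i)) (j - m)}" for m
  have Fs: "F m \<in> sets S" if "m \<le> j" for m
  proof -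
    have "(\<lambda>w. ren w m \<and> nr (\<lambda>i. w (m + i)) (j - m)) \<in> measurable S (count_space UNIV)"
    proof (rule fin_dep_meas[of j])
      fix w w' :: "nat \<Rightarrow> nat" assume a: "\<And>i. i \<le> j \<Longrightarrow> w i = w' i"
      have "ren w m = ren w' m" using a that by (auto simp: ren_def)
      moreover have "nr (\<lambda>i. w (m + i)) (j - m) = nr (\<lambda>i. w' (m + i)) (j - m)"
        using a that by (intro nr_cong) auto
      ultimately show "(ren w m \<and> nr (\<lambda>i. w (m + i)) (j - m)) = (ren w' m \<and> nr (\<lambda>i. w' (m + i)) (j - m))"
        by simp
    qed simp
    then have "(\<lambda>w. ren w m \<and> nr (\<lambda>i. w (m + i)) (j - m)) -` {True} \<inter> space S \<in> sets S"
      by (rule measurable_sets) simp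
    then show ?thesis by (simp add: F_def vimage_def)
  qed
  have cover: "(\<Union>m\<in>{..j}. F m) = UNIV"
  proof (intro equalityI subsetI)
    fix w :: "nat \<Rightarrow> nat"
    define T where "T = {t. t \<le> j \<and> ren w t}"
    have fT: "finite T" unfolding T_def by auto
    have "0 \<in> T" unfolding T_def by (simp add: ren_def)
    then have neT: "T \<noteq> {}" by auto
    define m0 where "m0 = Max T"
    have m0T: "m0 \<in> T" unfolding m0_def using fT neT by (rule Max_in)
    have "nr (\<lambda>i. w (m0 + i)) (j - m0)"
      unfolding nr_def
    proof
      fix k assume k: "k \<in> {1..j - m0}"
      show "\<not> ren (\<lambda>i. w (m0 + i)) k"
      proof
        assume "ren (\<lambda>i. w (m0 + i)) k"
        then have "ren w (m0 + k)" using ren_shift[of w m0 k] m0T by (simp add: T_def)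
        then have "m0 + k \<in> T" using k m0T by (auto simp: T_def)
        then have "m0 + k \<le> m0" unfolding m0_def by (rule Max_ge[OF fT])
        then show False using k by auto
      qed
    qed
    then have "w \<in> F m0" using m0T by (simp add: F_def T_def)
    then show "w \<in> (\<Union>m\<in>{..j}. F m)" using m0T by (auto simp: T_def)
  qed simp
  have disj1: "F m \<inter> F m' = {}" if "m < m'" "m' \<le> j" for m m'
  proof (rule ccontr)
    assume "F m \<inter> F m' \<noteq> {}"
    then obtain w where w: "w \<in> F m" "w \<in> F m'" by auto
    have rm: "ren w m" and nrm: "nr (\<lambda>i. w (m + i)) (j - m)" using w(1) by (auto simp: F_def)
    have "ren w (m + (m' - m))" using w(2) that by (simp add: F_def)
    then have "ren (\<lambda>i. w (m + i)) (m' - m)" using ren_shift[OF rm] by simp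
    moreover have "m' - m \<in> {1..j - m}" using that by auto
    ultimately show False using nrm by (auto simp: nr_def)
  qed
  have disj: "disjoint_family_on F {..j}"
    unfolding disjoint_family_on_def
  proof (intro ballI impI)
    fix m m' assume "m \<in> {..j}" "m' \<in> {..j}" "m \<noteq> m'"
    then show "F m \<inter> F m' = {}" using disj1[of m m'] disj1[of m' m] by (cases "m < m'") (auto simp: Int_commute)
  qed
  have "1 = measure S (\<Union>m\<in>{..j}. F m)" using cover P.prob_space by simp
  also have "\<dots> = (\<Sum>m\<le>j. measure S (F m))"
    by (rule measure_finite_Union) (use Fs disj in auto)
  also have "\<dots> = (\<Sum>m\<le>j. measure S {w. ren w m} * measure S {w. nr w (j - m)})"
    unfolding F_def by (simp add: F_prob)
  finally show ?thesis by simp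
qed

end



context mal
begin

definition U :: "nat \<Rightarrow> real" where "U m = (\<Prod>i\<in>{1..m}. 1 - q ^ i)"

lemma U_Suc: "U (Suc m) = U m * (1 - q ^ Suc m)"
  unfolding U_def by (simp add: prod.cl_ivl_Suc)

lemma U_nonneg: "0 \<le> U m" unfolding U_def by (intro prod_nonneg) auto

lemma U_le1: "U m \<le> 1" unfolding U_def by (intro prod_le_1) (auto simp: q0)

lemma U_dec: "U (m + k) \<le> U m"
proof (induction k)
  case 0 then show ?case by simp
next
  case (Suc k)
  have "U (m + Suc k) = U (m + k) * (1 - q ^ Suc (m + k))" by (simp add: U_Suc)
  also have "\<dots> \<le> U (m + k)" using U_nonneg[of "m + k"] q0 by (simp add: mult_left_le)
  finally show ?case using Suc by simp
qed

lemma U_diff: "U m - U (m + k) \<le> q ^ Suc m / (1 - q)"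
proof -
  have "U m - U (m + k) \<le> q ^ Suc m * (1 - q ^ k) / (1 - q)"
  proof (induction k)
    case 0 then show ?case by simp
  next
    case (Suc k)
    have "U m - U (m + Suc k) = (U m - U (m + k)) + U (m + k) * q ^ Suc (m + k)"
      by (simp add: U_Suc algebra_simps)
    also have "\<dots> \<le> q ^ Suc m * (1 - q ^ k) / (1 - q) + q ^ Suc (m + k)"
      using Suc U_le1[of "m + k"] U_nonneg[of "m + k"] by (intro add_mono mult_left_le_one_le) (auto simp del: power_Suc)
    also have "\<dots> = q ^ Suc m * (1 - q ^ Suc k) / (1 - q)"
      using q1 by (simp add: field_simps power_add)
    finally show ?case .
  qed
  also have "\<dots> \<le> q ^ Suc m / (1 - q)"
    using q1 by (intro divide_right_mono mult_left_le) (auto simp del: power_Suc)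
  finally show ?thesis .
qed

lemma exp_le_one_minus: assumes "0 \<le> x" "x \<le> q" shows "exp (- x / (1 - q)) \<le> 1 - x"
proof -
  have x1: "x < 1" using assms q1 by simp
  have "ln (1 / (1 - x)) \<le> 1 / (1 - x) - 1" using x1 by (intro ln_le_minus_one) simp
  also have "1 / (1 - x) - 1 = x / (1 - x)" using x1 by (simp add: field_simps)
  also have "\<dots> \<le> x / (1 - q)" using assms q1 by (intro divide_left_mono) auto
  finally have "- x / (1 - q) \<le> ln (1 - x)" using x1 by (simp add: ln_div)
  then have "exp (- x / (1 - q)) \<le> exp (ln (1 - x))" by simp
  also have "\<dots> = 1 - x" using x1 by simp
  finally show ?thesis .
qed

lemma geo_partial: "(\<Sum>i\<in>{1..m}. q ^ i) = q * (1 - q ^ m) / (1 - q)"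
proof (induction m)
  case 0 then show ?case by simp
next
  case (Suc m)
  have "(\<Sum>i\<in>{1..Suc m}. q ^ i) = q * (1 - q ^ m) / (1 - q) + q ^ Suc m"
    using Suc by (simp add: sum.cl_ivl_Suc)
  also have "\<dots> = q * (1 - q ^ Suc m) / (1 - q)"
    using q1 by (simp add: field_simps)
  finally show ?case .
qed

lemma U_lower: "exp (- q / (1 - q)^2) \<le> U m"
proof -
  have "exp (- (\<Sum>i\<in>{1..m}. q ^ i) / (1 - q)) \<le> U m"
  proof (induction m)
    case 0 then show ?case by (simp add: U_def)
  next
    case (Suc m)
    have "exp (- (\<Sum>i\<in>{1..Suc m}. q ^ i) / (1 - q)) =
          exp (- (\<Sum>i\<in>{1..m}. q ^ i) / (1 - q)) * exp (- (q ^ Suc m) / (1 - q))"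
      by (simp add: sum.cl_ivl_Suc exp_add[symmetric] diff_divide_distrib add_divide_distrib del: power_Suc)
    also have "\<dots> \<le> U m * (1 - q ^ Suc m)"
    proof (rule mult_mono)
      show "exp (- (q ^ Suc m) / (1 - q)) \<le> 1 - q ^ Suc m"
        using q0 q1 qpow_le1[of m] by (intro exp_le_one_minus) (auto simp: mult_left_le)
    qed (use Suc U_nonneg in auto)
    finally show ?case by (simp add: U_Suc)
  qed
  moreover have "- q / (1 - q)^2 \<le> - (\<Sum>i\<in>{1..m}. q ^ i) / (1 - q)"
  proof -
    have "(\<Sum>i\<in>{1..m}. q ^ i) \<le> q / (1 - q)"
      unfolding geo_partial using q0 q1 by (intro divide_right_mono) (auto simp: mult_left_le)
    then have "(\<Sum>i\<in>{1..m}. q ^ i) / (1 - q) \<le> q / (1 - q) / (1 - q)"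
      using q1 by (intro divide_right_mono) auto
    then show ?thesis by (simp add: power2_eq_square)
  qed
  ultimately show ?thesis by (meson exp_le_cancel_iff order_trans)
qed

definition rr :: "nat \<Rightarrow> real" where "rr k = measure S {w. nr w k}"

lemma ident': "(\<Sum>k\<le>j. rr k * U (j - k)) = 1"
proof -
  have "(\<Sum>k\<le>j. rr k * U (j - k)) = (\<Sum>k\<in>{0..j}. U (j - k) * rr (j - (j - k)))"
    by (intro sum.cong) (auto simp: atLeast0AtMost)
  also have "\<dots> = (\<Sum>m\<in>{0..j}. U m * rr (j - m))"
    by (subst (2) sum.atLeastAtMost_rev) simp
  also have "\<dots> = 1"
    using renewal_identity[of j] by (simp add: ren_prob U_def rr_def atLeast0AtMost)
  finally show ?thesis .
qed

definition Bnd :: real where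
  "Bnd = 2 * (q / ((1 - q)^2 * (exp (- q / (1 - q)^2))^2)) + 1 / exp (- q / (1 - q)^2)"

lemma tail_sum_bound: "(\<Sum>k\<le>N. real (2 * k + 1) * rr k) \<le> Bnd"
proof -
  note rb = renewal_bound[of "exp (- q / (1 - q)^2)" q rr U, OF _ q0 q1 _ U_lower U_dec U_diff ident']
  have r0: "0 \<le> rr k" for k by (simp add: rr_def)
  have a: "(\<Sum>k\<le>N. rr k) \<le> 1 / exp (- q / (1 - q)^2)" using rb(1) r0 by auto
  have b: "(\<Sum>k\<le>N. real k * rr k) \<le> q / ((1 - q)^2 * (exp (- q / (1 - q)^2))^2)" using rb(2) r0 by auto
  have "(\<Sum>k\<le>N. real (2 * k + 1) * rr k) = 2 * (\<Sum>k\<le>N. real k * rr k) + (\<Sum>k\<le>N. rr k)"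
    by (simp add: sum.distrib sum_distrib_left algebra_simps)
  also have "\<dots> \<le> Bnd" unfolding Bnd_def using a b by linarith
  finally show ?thesis .
qed

lemma fb_gt_nr: "k < first_block w \<Longrightarrow> nr w k"
  unfolding nr_def using block_le by fastforce

lemma sum_odd: "(\<Sum>k<n. real (2 * k + 1)) = real n ^ 2"
  by (induction n) (auto simp: power2_eq_square algebra_simps)

lemma X2_integrable: "integrable S (\<lambda>w. real (first_block w) ^ 2)"
proof -
  have meas: "(\<lambda>w. real (first_block w) ^ 2) \<in> borel_measurable S"
    using fb_meas by (rule measurable_compose) simp
  have fbsets: "{w. k < first_block w} \<in> sets S" for k
  proof -
    have "first_block -` {k<..} \<inter> space S \<in> sets S" by (rule measurable_sets[OF fb_meas]) simp
    then show ?thesis by (simp add: vimage_def)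
  qed
  define f where "f k w = ennreal (real (2 * k + 1)) * indicator {w. k < first_block w} w" for k w
  have pw: "ennreal (norm (real (first_block w) ^ 2)) = (\<Sum>k. f k w)" for w
  proof -
    have "(\<Sum>k. f k w) = (\<Sum>k<first_block w. f k w)"
      by (rule suminf_finite) (auto simp: f_def)
    also have "\<dots> = (\<Sum>k<first_block w. ennreal (real (2 * k + 1)))"
      by (intro sum.cong) (auto simp: f_def)
    also have "\<dots> = ennreal (\<Sum>k<first_block w. real (2 * k + 1))"
      by (rule sum_ennreal) simp
    also have "\<dots> = ennreal (real (first_block w) ^ 2)" by (simp only: sum_odd)
    finally show ?thesis by simp
  qed
  have "(\<integral>\<^sup>+ w. ennreal (norm (real (first_block w) ^ 2)) \<partial>S) = (\<integral>\<^sup>+ w. (\<Sum>k. f k w) \<partial>S)"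
    by (simp only: pw)
  also have "\<dots> = (\<Sum>k. integral\<^sup>N S (f k))"
    by (rule nn_integral_suminf) (use fbsets in \<open>auto simp: f_def\<close>)
  also have "\<dots> \<le> (\<Sum>k. ennreal (real (2 * k + 1) * rr k))"
  proof (intro suminf_le allI)
    fix k
    have "integral\<^sup>N S (f k) = ennreal (real (2 * k + 1)) * emeasure S {w. k < first_block w}"
      unfolding f_def by (rule nn_integral_cmult_indicator[OF fbsets])
    also have "\<dots> \<le> ennreal (real (2 * k + 1)) * emeasure S {w. nr w k}"
      by (intro mult_left_mono emeasure_mono) (auto simp: fb_gt_nr nr_meas)
    also have "\<dots> = ennreal (real (2 * k + 1) * rr k)"
      by (simp add: rr_def P.emeasure_eq_measure ennreal_mult)
    finally show "integral\<^sup>N S (f k) \<le> ennreal (real (2 * k + 1) * rr k)" .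
  qed auto
  also have "\<dots> = ennreal (\<Sum>k. real (2 * k + 1) * rr k)"
  proof (rule suminf_ennreal2)
    show "summable (\<lambda>k. real (2 * k + 1) * rr k)"
    proof (rule summableI_nonneg_bounded)
      fix n
      show "(\<Sum>k<n. real (2 * k + 1) * rr k) \<le> Bnd"
      proof -
        have "(\<Sum>k<n. real (2 * k + 1) * rr k) \<le> (\<Sum>k\<le>n. real (2 * k + 1) * rr k)"
          by (intro sum_mono2) (auto simp: rr_def)
        then show ?thesis using tail_sum_bound[of n] by linarith
      qed
    qed (simp add: rr_def)
  qed (simp add: rr_def)
  also have "\<dots> < \<infinity>" by simp
  finally show ?thesis unfolding integrable_iff_bounded using meas by simp
qed

end



lemma cycle_count_le: "finite A \<Longrightarrow> cycle_count \<sigma> A j \<le> card A"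
proof -
  assume fA: "finite A"
  have "{perm_orbit \<sigma> x |x. x \<in> A \<and> card (perm_orbit \<sigma> x) = j} =
        perm_orbit \<sigma> ` {x \<in> A. card (perm_orbit \<sigma> x) = j}" by auto
  then have "cycle_count \<sigma> A j = card (perm_orbit \<sigma> ` {x \<in> A. card (perm_orbit \<sigma> x) = j})"
    unfolding cycle_count_def by simp
  also have "\<dots> \<le> card {x \<in> A. card (perm_orbit \<sigma> x) = j}" by (rule card_image_le) (use fA in simp)
  also have "\<dots> \<le> card A" using fA by (intro card_mono) auto
  finally show ?thesis .
qed

lemma AE_pick:
  assumes "AE w in M. P w" "A \<in> sets M" "emeasure M A \<noteq> 0"
  shows "\<exists>w\<in>A. P w"
proof (rule ccontr)
  assume "\<not> (\<exists>w\<in>A. P w)"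
  then have "AE w in M. \<not> (w \<in> A)" using assms(1) by (auto elim: AE_mp)
  then have "emeasure M {w \<in> space M. w \<in> A} = 0" by (rule emeasure_eq_0_AE)
  moreover have "{w \<in> space M. w \<in> A} = A" using sets.sets_into_space[OF assms(2)] by auto
  ultimately show False using assms(3) by simp
qed

lemma sq_diff_le: "(x - y)^2 \<le> 2 * x^2 + 2 * (y::real)^2"
proof -
  have "(x - y)^2 + (x + y)^2 = 2 * x^2 + 2 * y^2" by (simp add: power2_eq_square algebra_simps)
  moreover have "0 \<le> (x + y)^2" by simp
  ultimately show ?thesis by linarith
qed

lemma real_le_sq: "real (n::nat) \<le> real n ^ 2"
  by (cases n) (auto simp: power2_eq_square)

context mal
begin

lemma cyc_sets: "cyc n \<in> sets S"
proof -
  have "(\<lambda>w. w \<in> cyc n) \<in> measurable S (count_space UNIV)"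
    by (rule fin_dep_meas[of n]) (auto simp: cyc_def)
  then have "(\<lambda>w. w \<in> cyc n) -` {True} \<inter> space S \<in> sets S" by (rule measurable_sets) simp
  then show ?thesis by (simp add: vimage_def)
qed

lemma cyc_pos: "1 \<le> n \<Longrightarrow> emeasure S (cyc n) \<noteq> 0"
proof -
  assume n: "1 \<le> n"
  define Z where "Z i = (if i < n then {1} else {0::nat})" for i
  define z where "z i = (if i < n then 1 else (0::nat))" for i
  have Zz: "Z i = {z i}" for i by (simp add: Z_def z_def)
  have set: "cyc n = {x \<in> space S. \<forall>i\<in>{1..n}. x i \<in> Z i}"
    using n by (auto simp: cyc_def Z_def)
  have "emeasure S (cyc n) = (\<Prod>i\<in>{1..n}. emeasure (measure_pmf (geometric_pmf (1 - q))) (Z i))"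
    unfolding set by (rule emeasure_PiM_Collect) auto
  also have "\<dots> = (\<Prod>i\<in>{1..n}. ennreal (pmf (geometric_pmf (1 - q)) (z i)))"
    by (simp add: Zz emeasure_pmf_single)
  also have "\<dots> = ennreal (\<Prod>i\<in>{1..n}. pmf (geometric_pmf (1 - q)) (z i))"
    by (rule prod_ennreal) simp
  also have "(\<Prod>i\<in>{1..n}. pmf (geometric_pmf (1 - q)) (z i)) > 0"
    using q0 q1 by (intro prod_pos) (simp add: pmf_geometric)
  then have "ennreal (\<Prod>i\<in>{1..n}. pmf (geometric_pmf (1 - q)) (z i)) \<noteq> 0" by (metis ennreal_eq_0_iff not_le)
  finally show ?thesis .
qed

end

theorem lemma3p4:
  fixes q :: real and l :: nat and a :: "nat \<Rightarrow> real"
  assumes "0 < q" "q < 1"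
    and "\<exists>j\<in>{1..l}. a j \<noteq> 0"
  defines "M \<equiv> mallows_space q"
    and "X \<equiv> (\<lambda>w. real (first_block w))"
    and "Y \<equiv> (\<lambda>w. \<Sum>j=1..l. a j *
                 real (cycle_count (first_block_perm w) {1..first_block w} j))"
  defines "V \<equiv> (\<lambda>w. Y w * integral\<^sup>L M X - X w * integral\<^sup>L M Y)"
  shows "integral\<^sup>L M (\<lambda>w. (V w - integral\<^sup>L M V)\<^sup>2) > 0"
proof -
  interpret mal q using assms(1,2) by unfold_locales
  have MS: "M = S" unfolding M_def by (simp add: mallows_space_def)
  have Xm: "X \<in> borel_measurable S" unfolding X_def using fb_meas by (rule measurable_compose) simp
  define Yg where "Yg n w = (\<Sum>j=1..l. a j *
      real (cycle_count (\<lambda>x. if x \<in> {1..n} then mallows_perm w x else x) {1..n} j))" for n w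
  have Ym: "Y \<in> borel_measurable S"
  proof -
    have fbp: "first_block_perm w = (\<lambda>x. if x \<in> {1..first_block w} then mallows_perm w x else x)" for w
      by (intro ext) (simp add: first_block_perm_def)
    have eqY: "Y = (\<lambda>w. Yg (first_block w) w)"
      unfolding Y_def Yg_def fbp ..
    have "(\<lambda>w. Yg (first_block w) w) \<in> borel_measurable S"
    proof (rule measurable_compose_countable[OF _ fb_meas])
      fix n
      show "(\<lambda>w. Yg n w) \<in> borel_measurable S"
      proof (rule fin_dep_meas[of n])
        fix w w' :: "nat \<Rightarrow> nat" assume a: "\<And>i. i \<le> n \<Longrightarrow> w i = w' i"
        have "(\<lambda>x. if x \<in> {1..n} then mallows_perm w x else x) =
              (\<lambda>x. if x \<in> {1..n} then mallows_perm w' x else x)"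
        proof (intro ext)
          fix x
          show "(if x \<in> {1..n} then mallows_perm w x else x) = (if x \<in> {1..n} then mallows_perm w' x else x)"
          proof (cases "x \<in> {1..n}")
            case True
            then have "mallows_list w x = mallows_list w' x" using a by (intro ml_cong) auto
            then show ?thesis using True by (simp add: mallows_perm_def)
          next
            case False
            then show ?thesis by (simp only: if_False)
          qed
        qed
        then show "Yg n w = Yg n w'" unfolding Yg_def by simp
      qed simp
    qed
    then show ?thesis using eqY by simp
  qed
  define K where "K = (\<Sum>j=1..l. \<bar>a j\<bar>)"
  have K0: "0 \<le> K" unfolding K_def by (intro sum_nonneg) auto
  have Ybound: "\<bar>Y w\<bar> \<le> K * X w" for w
  proof -
    have "\<bar>Y w\<bar> \<le> (\<Sum>j=1..l. \<bar>a j * real (cycle_count (first_block_perm w) {1..first_block w} j)\<bar>)"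
      unfolding Y_def by (rule sum_abs)
    also have "\<dots> \<le> (\<Sum>j=1..l. \<bar>a j\<bar> * X w)"
    proof (intro sum_mono)
      fix j
      have "cycle_count (first_block_perm w) {1..first_block w} j \<le> first_block w"
        using cycle_count_le[of "{1..first_block w}"] by simp
      then show "\<bar>a j * real (cycle_count (first_block_perm w) {1..first_block w} j)\<bar> \<le> \<bar>a j\<bar> * X w"
        unfolding X_def by (simp add: abs_mult mult_left_mono)
    qed
    also have "\<dots> = K * X w" unfolding K_def by (simp add: sum_distrib_right)
    finally show ?thesis .
  qed
  have X0: "0 \<le> X w" for w unfolding X_def by simp
  have X2i: "integrable S (\<lambda>w. X w ^ 2)" unfolding X_def by (rule X2_integrable)
  have Xi: "integrable S X"
  proof (rule Bochner_Integration.integrable_bound[OF X2i Xm], intro AE_I2)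
    fix w show "norm (X w) \<le> norm (X w ^ 2)"
      using real_le_sq[of "first_block w"] by (simp add: X_def)
  qed
  have Yi: "integrable S Y"
  proof (rule Bochner_Integration.integrable_bound[OF _ Ym])
    show "integrable S (\<lambda>w. K * X w)" using Xi by simp
    show "AE w in S. norm (Y w) \<le> norm (K * X w)"
      using Ybound K0 X0 by (auto simp: abs_mult)
  qed
  define ex where "ex = integral\<^sup>L S X"
  define ey where "ey = integral\<^sup>L S Y"
  have Veq: "V = (\<lambda>w. Y w * ex - X w * ey)" unfolding V_def ex_def ey_def MS ..
  define C where "C = K * \<bar>ex\<bar> + \<bar>ey\<bar>"
  have C0: "0 \<le> C" unfolding C_def using K0 by simp
  have Vm: "V \<in> borel_measurable S" unfolding Veq using Xm Ym by measurable
  have Vbound: "\<bar>V w\<bar> \<le> C * X w" for w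
  proof -
    have "\<bar>V w\<bar> \<le> \<bar>Y w * ex\<bar> + \<bar>X w * ey\<bar>"
      unfolding Veq by (rule abs_triangle_ineq4)
    also have "\<dots> = \<bar>Y w\<bar> * \<bar>ex\<bar> + X w * \<bar>ey\<bar>" using X0[of w] by (simp add: abs_mult)
    also have "\<dots> \<le> K * X w * \<bar>ex\<bar> + X w * \<bar>ey\<bar>"
      using Ybound[of w] by (intro add_mono mult_right_mono) auto
    also have "\<dots> = C * X w" unfolding C_def by (simp add: algebra_simps)
    finally show ?thesis .
  qed
  have Vi: "integrable S V"
  proof (rule Bochner_Integration.integrable_bound[OF _ Vm])
    show "integrable S (\<lambda>w. C * X w)" using Xi by simp
    show "AE w in S. norm (V w) \<le> norm (C * X w)"
      using Vbound C0 X0 by (auto simp: abs_mult)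
  qed
  define ev where "ev = integral\<^sup>L S V"
  define W where "W w = (V w - ev)^2" for w
  have Wm: "W \<in> borel_measurable S" unfolding W_def using Vm by measurable
  have Wi: "integrable S W"
  proof (rule Bochner_Integration.integrable_bound[OF _ Wm])
    show "integrable S (\<lambda>w. 2 * C^2 * X w ^ 2 + 2 * ev^2)"
      using X2i by (intro Bochner_Integration.integrable_add) auto
    show "AE w in S. norm (W w) \<le> norm (2 * C^2 * X w ^ 2 + 2 * ev^2)"
    proof (rule AE_I2)
      fix w
      have "V w ^ 2 \<le> (C * X w) ^ 2"
        using Vbound[of w] by (metis abs_ge_zero power2_abs power_mono)
      then have "W w \<le> 2 * C^2 * X w ^ 2 + 2 * ev^2"
        unfolding W_def using sq_diff_le[of "V w" ev] by (simp add: power_mult_distrib)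
      then show "norm (W w) \<le> norm (2 * C^2 * X w ^ 2 + 2 * ev^2)"
        unfolding W_def by simp
    qed
  qed
  have goal_eq: "integral\<^sup>L M (\<lambda>w. (V w - integral\<^sup>L M V)\<^sup>2) = integral\<^sup>L S W"
    unfolding MS W_def ev_def ..
  have ex_pos: "0 < ex"
  proof -
    have "0 \<le> ex" unfolding ex_def by (intro integral_nonneg_AE) (auto simp: X0)
    moreover have "ex \<noteq> 0"
    proof
      assume "ex = 0"
      then have "AE w in S. X w = 0"
        using integral_nonneg_eq_0_iff_AE[OF Xi] X0 unfolding ex_def by auto
      then obtain w where "w \<in> cyc 1" "X w = 0" using AE_pick[OF _ cyc_sets cyc_pos[of 1]] by auto
      then show False using cyc_first_block[of w 1] by (simp add: X_def)
    qed
    ultimately show ?thesis by simp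
  qed
  show ?thesis unfolding goal_eq
  proof (rule ccontr)
    assume "\<not> 0 < integral\<^sup>L S W"
    moreover have "0 \<le> integral\<^sup>L S W" unfolding W_def by simp
    ultimately have "integral\<^sup>L S W = 0" by simp
    then have "AE w in S. W w = 0"
      using integral_nonneg_eq_0_iff_AE[OF Wi] by (simp add: W_def)
    then have AEV: "AE w in S. V w = ev" by (auto simp: W_def)
    have key: "(if n \<le> l then a n else 0) * ex - real n * ey = ev" if n: "1 \<le> n" for n
    proof -
      obtain w where w: "w \<in> cyc n" "V w = ev" using AE_pick[OF AEV cyc_sets cyc_pos[OF n]] by auto
      have "Y w = (if n \<le> l then a n else 0)" unfolding Y_def by (rule cyc_Y[OF w(1) n])
      moreover have "X w = real n" unfolding X_def using cyc_first_block[OF w(1) n] by simp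
      ultimately show ?thesis using w(2) unfolding Veq by simp
    qed
    have k1: "real (l + 1) * ey = - ev" using key[of "l + 1"] by (simp add: algebra_simps)
    have k2: "real (l + 2) * ey = - ev" using key[of "l + 2"] by (simp add: algebra_simps)
    have "ey = real (l + 2) * ey - real (l + 1) * ey" by (simp add: algebra_simps)
    then have ey0: "ey = 0" using k1 k2 by simp
    then have ev0: "ev = 0" using k1 by simp
    obtain j where j: "j \<in> {1..l}" "a j \<noteq> 0" using assms(3) by auto
    have "a j * ex = 0" using key[of j] j ey0 ev0 by simp
    then show False using j ex_pos by simp
  qed
qed



end
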